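(* Let $d\ge 1$, $A \in \mathbb{R}^{d+1}$ and $\Xi \in \mathbb{R}^{(d+1)\times d}$. Let $\Delta_d=\{\lambda\in\mathbb{R}^{d+1}:\lambda_i\ge 0,\sum_i\lambda_i=1\}$, integrate over $\Delta_d$ with respect to its $d$-dimensional Lebesgue (surface) measure, let $v(d)=\int_{\Delta_d}\mathrm{d}\lambda$, and let $\Sigma(d)$ be the covariance matrix of the uniform distribution on $\Delta_d$ (the Dirichlet$(1,\dots,1)$ distribution). Then $$\min_{\alpha_0\in\mathbb{R},\,\alpha\in\mathbb{R}^d}\ \int_{\Delta_d}\bigl(\alpha_0 - (A - \Xi\alpha)^\top\lambda\bigr)^2\,\mathrm{d}\lambda = v(d)\, A^\top\Bigl(\Sigma(d) - \Sigma(d)\,\Xi\,\bigl(\Xi^\top\Sigma(d)\,\Xi\bigr)^\dagger\,\Xi^\top\Sigma(d)\Bigr)A.$$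
   Context: $M^\dagger$ denotes the Moore–Penrose pseudoinverse of a matrix $M$. *)

theory Defs
  imports "HOL-Analysis.Analysis"
begin

text \<open>The vectors of R^(d+1) are indexed by the type 'm option (d = CARD('m));
  the coordinate None plays the role of the last barycentric coordinate.\<close>

definition simplex_dom :: "(real^'m::finite) set" where
  "simplex_dom = {x. (\<forall>i. 0 \<le> x$i) \<and> (\<Sum>i\<in>UNIV. x$i) \<le> 1}"

definition simplex_param :: "real^'m::finite \<Rightarrow> real^('m option)" where
  "simplex_param x = (\<chi> j. case j of None \<Rightarrow> 1 - (\<Sum>i\<in>UNIV. x$i) | Some i \<Rightarrow> x$i)"

text \<open>Integral over the standard simplex Delta_d in R^(d+1) w.r.t. d-dimensional surface
  (Hausdorff) measure: parametrize by the first d coordinates; the area factor of this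
  parametrization is sqrt(d+1).\<close>
definition simplex_integral :: "(real^('m::finite option) \<Rightarrow> real) \<Rightarrow> real" where
  "simplex_integral f =
     sqrt (real CARD('m option)) * integral (simplex_dom :: (real^'m) set) (\<lambda>x. f (simplex_param x))"

definition simplex_volume :: "'m::finite itself \<Rightarrow> real" where
  "simplex_volume _ = simplex_integral (\<lambda>_::real^('m option). 1)"

definition simplex_mean :: "'m::finite option \<Rightarrow> real" where
  "simplex_mean i = simplex_integral (\<lambda>l::real^('m option). l$i) / simplex_volume TYPE('m)"

definition simplex_cov :: "real^('m::finite option)^('m option)" where
  "simplex_cov = (\<chi> i j. simplex_integral (\<lambda>l::real^('m option). l$i * l$j) / simplex_volume TYPE('m)
                           - simplex_mean i * simplex_mean j)"

definition pinv :: "real^'b::finite^'a::finite \<Rightarrow> real^'a^'b" where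
  "pinv M = (THE X. M ** X ** M = M \<and> X ** M ** X = X \<and>
                    transpose (M ** X) = M ** X \<and> transpose (X ** M) = X ** M)"

end

theory Submission
  imports Defs
begin


lemma transpose_dot: "(transpose A *v x) \<bullet> y = x \<bullet> ((A::real^'n^'m) *v y)"
  by (metis dot_lmul_matrix vector_transpose_matrix transpose_transpose)

lemma tdot: "((X::real^'n^'m) *v a) \<bullet> y = a \<bullet> (transpose X *v y)"
  by (metis transpose_dot inner_commute)

lemma sym_matrix_iff:
  fixes A :: "real^'n^'n"
  assumes "\<And>x y. (A *v x) \<bullet> y = x \<bullet> (A *v y)"
  shows "transpose A = A"
proof -
  have "transpose A *v x = A *v x" for x
    using assms transpose_dot by (metis vector_eq_rdot)
  thus ?thesis by (simp add: matrix_eq)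
qed

lemma sym_dot:
  fixes A :: "real^'n^'n"
  assumes "transpose A = A"
  shows "(A *v x) \<bullet> y = x \<bullet> (A *v y)"
  using transpose_dot[of A x y] assms by simp

lemma pinv_exists_sym:
  fixes M :: "real^'n^'n"
  assumes symM: "transpose M = M"
  shows "\<exists>G. M ** G ** M = M \<and> G ** M ** G = G \<and> transpose (M ** G) = M ** G \<and> transpose (G ** M) = G ** M"
proof -
  define U where "U = range (\<lambda>x. M *v x)"
  have subU: "subspace U" unfolding U_def
    by (simp add: linear_subspace_image)
  obtain B where BU: "B \<subseteq> U" and orth: "pairwise orthogonal B"
     and nB: "\<And>x. x \<in> B \<Longrightarrow> norm x = 1" and indB: "independent B" and spB: "span B = U"
    using orthonormal_basis_subspace[OF subU] by metis
  have finB: "finite B" using indB independent_imp_finite by blast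
  define pr where "pr y = (\<Sum>b\<in>B. (b \<bullet> y) *\<^sub>R b)" for y
  have lin_pr: "linear pr" unfolding pr_def
    by (intro linearI) (auto simp: inner_add_right scaleR_add_left sum.distrib scaleR_sum_right)
  have prU: "pr y \<in> U" for y
    unfolding pr_def spB[symmetric] by (intro span_sum span_mul span_base) 
  have bb: "b \<bullet> b = 1" if "b \<in> B" for b using nB[OF that] by (simp add: norm_eq_1)
  have orthB: "(y - pr y) \<bullet> c = 0" if c: "c \<in> B" for y c
  proof -
    have "pr y \<bullet> c = (\<Sum>b\<in>B. (b \<bullet> y) * (b \<bullet> c))" unfolding pr_def by (simp add: inner_sum_left)
    also have "\<dots> = (c \<bullet> y) * (c \<bullet> c) + (\<Sum>b\<in>B-{c}. (b \<bullet> y) * (b \<bullet> c))"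
      using finB c by (simp add: sum.remove)
    also have "(\<Sum>b\<in>B-{c}. (b \<bullet> y) * (b \<bullet> c)) = 0"
      using orth c by (intro sum.neutral) (auto simp: pairwise_def orthogonal_def)
    finally show ?thesis using bb[OF c] by (simp add: inner_diff_left inner_diff_right inner_commute)
  qed
  have orthU: "(y - pr y) \<bullet> u = 0" if "u \<in> U" for y u
    using orthogonal_to_span[of u B "y - pr y"] orthB that spB unfolding orthogonal_def by blast
  have pr_id: "pr u = u" if "u \<in> U" for u
  proof -
    have "u - pr u \<in> U" using that prU subU by (simp add: subspace_diff)
    hence "(u - pr u) \<bullet> (u - pr u) = 0" using orthU[of "u - pr u" u] by blast
    thus ?thesis by simp
  qed
  have pr_sym: "pr y \<bullet> z = y \<bullet> pr z" for y z
    unfolding pr_def by (simp add: inner_sum_left inner_sum_right inner_commute mult.commute)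
  have ker: "M *v y = 0" if "\<And>u. u \<in> U \<Longrightarrow> y \<bullet> u = 0" for y
  proof -
    have "(M *v y) \<bullet> (M *v y) = y \<bullet> (M *v (M *v y))" using sym_dot[OF symM] by blast
    also have "\<dots> = 0" using that by (simp add: U_def)
    finally show ?thesis by simp
  qed
  have Mpr: "M *v pr x = M *v x" for x
  proof -
    have "M *v (x - pr x) = 0" using ker orthU by blast
    thus ?thesis by (simp add: matrix_vector_mult_diff_distrib)
  qed
  have inj: "inj_on (\<lambda>x. M *v x) (span U)"
  proof (rule inj_onI)
    fix x y assume x: "x \<in> span U" and y: "y \<in> span U" and e: "M *v x = M *v y"
    have d: "x - y \<in> U" using x y subU by (metis span_eq_iff subspace_diff)
    then obtain v where v: "x - y = M *v v" by (auto simp: U_def)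
    have "(x - y) \<bullet> (x - y) = v \<bullet> (M *v (x - y))" using v sym_dot[OF symM] by metis
    also have "\<dots> = 0" using e by (simp add: matrix_vector_mult_diff_distrib)
    finally show "x = y" by simp
  qed
  obtain g where gU: "range g \<subseteq> span U" and lin_g: "linear g" and ginv: "\<And>x. x \<in> span U \<Longrightarrow> g (M *v x) = x"
    using linear_inj_on_left_inverse[OF matrix_vector_mul_linear inj] by blast
  have spU: "span U = U" using subU by (simp add: span_eq_iff)
  have gU': "g y \<in> U" for y using gU spU by blast
  have ginv': "g (M *v u) = u" if "u \<in> U" for u using ginv spU that by blast
  define h where "h = g \<circ> pr"
  have lin_h: "linear h" unfolding h_def using lin_g lin_pr by (simp add: linear_compose)
  define G where "G = matrix h"
  have Gv: "G *v y = g (pr y)" for y unfolding G_def using matrix_vector_mul(2)[OF lin_h] h_def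
    by (metis comp_apply)
  have GM: "G *v (M *v x) = pr x" for x
  proof -
    have "G *v (M *v x) = g (M *v x)" using Gv pr_id by (simp add: U_def)
    also have "\<dots> = g (M *v pr x)" by (simp add: Mpr)
    also have "\<dots> = pr x" using ginv' prU by blast
    finally show ?thesis .
  qed
  have MG: "M *v (G *v y) = pr y" for y
  proof -
    obtain v where "pr y = M *v v" using prU unfolding U_def by blast
    hence "pr y = M *v pr v" by (simp add: Mpr)
    thus ?thesis using Gv ginv' prU by metis
  qed
  have 1: "M ** G ** M = M"
    by (simp add: matrix_eq flip: matrix_vector_mul_assoc) (simp add: GM Mpr)
  have 2: "G ** M ** G = G"
    by (simp add: matrix_eq flip: matrix_vector_mul_assoc) (simp add: Gv pr_id U_def ginv'[OF gU'])
  have 3: "transpose (M ** G) = M ** G"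
    by (rule sym_matrix_iff) (simp add: MG flip: matrix_vector_mul_assoc, rule pr_sym)
  have 4: "transpose (G ** M) = G ** M"
    by (rule sym_matrix_iff) (simp add: GM flip: matrix_vector_mul_assoc, rule pr_sym)
  show ?thesis using 1 2 3 4 by blast
qed

lemma pinv_unique:
  fixes M :: "real^'b^'a" and X1 X2 :: "real^'a^'b"
  assumes a1: "M ** X1 ** M = M" and b1: "X1 ** M ** X1 = X1"
    and c1: "transpose (M ** X1) = M ** X1" and d1: "transpose (X1 ** M) = X1 ** M"
  assumes a2: "M ** X2 ** M = M" and b2: "X2 ** M ** X2 = X2"
    and c2: "transpose (M ** X2) = M ** X2" and d2: "transpose (X2 ** M) = X2 ** M"
  shows "X1 = X2"
proof -
  have tM: "transpose M = transpose M ** (M ** X2)"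
    using a2 c2 by (metis matrix_transpose_mul matrix_mul_assoc)
  have "X1 = X1 ** (transpose X1 ** transpose M)"
    using b1 c1 by (metis matrix_transpose_mul matrix_mul_assoc)
  also have "\<dots> = X1 ** (transpose X1 ** transpose M) ** (M ** X2)"
    using tM by (metis matrix_mul_assoc)
  also have "\<dots> = X1 ** transpose (M ** X1) ** (M ** X2)"
    by (metis matrix_transpose_mul matrix_mul_assoc)
  also have "\<dots> = X1 ** M ** X2"
    using c1 b1 by (metis matrix_mul_assoc)
  finally have e1: "X1 = X1 ** M ** X2" .
  have tM2: "transpose M = (X1 ** M) ** transpose M"
    using a1 d1 by (metis matrix_transpose_mul matrix_mul_assoc)
  have "X2 = (transpose M ** transpose X2) ** X2"
    using b2 d2 by (metis matrix_transpose_mul matrix_mul_assoc)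
  also have "\<dots> = (X1 ** M) ** (transpose M ** transpose X2) ** X2"
    using tM2 by (metis matrix_mul_assoc)
  also have "\<dots> = (X1 ** M) ** transpose (X2 ** M) ** X2"
    by (metis matrix_transpose_mul matrix_mul_assoc)
  also have "\<dots> = X1 ** M ** X2"
    using d2 b2 by (metis matrix_mul_assoc)
  finally show ?thesis using e1 by simp
qed

lemma psd_zero:
  fixes S :: "real^'n^'n"
  assumes sym: "transpose S = S" and psd: "\<And>w. 0 \<le> w \<bullet> (S *v w)"
    and z: "x \<bullet> (S *v x) = 0"
  shows "S *v x = 0"
proof -
  define y where "y = S *v x"
  define n where "n = y \<bullet> y"
  define c where "c = y \<bullet> (S *v y)"
  have c0: "c \<ge> 0" using psd c_def by simp
  have xy: "x \<bullet> (S *v y) = n" using sym_dot[OF sym, of x y] n_def y_def by (simp add: inner_commute)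
  have q: "0 \<le> t^2 * c - 2 * t * n" for t
  proof -
    have "0 \<le> (x - t *\<^sub>R y) \<bullet> (S *v (x - t *\<^sub>R y))" by (rule psd)
    also have "\<dots> = x \<bullet> (S *v x) - t * (x \<bullet> (S *v y)) - t * (y \<bullet> (S *v x)) + t^2 * c"
      by (simp add: matrix_vector_mult_diff_distrib matrix_vector_mult_scaleR inner_diff_left inner_diff_right
           algebra_simps power2_eq_square c_def)
    finally show ?thesis using z xy n_def y_def by simp
  qed
  have "n = 0"
  proof (cases "c = 0")
    case True then show ?thesis using q[of 1] inner_ge_zero[of y] unfolding n_def by simp
  next
    case False
    hence "c > 0" using c0 by simp
    have "0 \<le> (n/c)^2 * c - 2 * (n/c) * n" by (rule q)
    also have "\<dots> = - (n^2 / c)" using \<open>c > 0\<close> by (simp add: field_simps power2_eq_square)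
    finally have "n^2 / c \<le> 0" by simp
    hence "n^2 \<le> 0" using \<open>c > 0\<close> by (simp add: divide_le_0_iff)
    thus ?thesis by simp
  qed
  thus ?thesis using n_def y_def by simp
qed

lemma lsq:
  fixes S :: "real^'n^'n" and X :: "real^'m^'n" and A :: "real^'n" and P :: "real^'m^'m"
  assumes sym: "transpose S = S" and psd: "\<And>w. 0 \<le> w \<bullet> (S *v w)"
  defines "M \<equiv> transpose X ** S ** X"
  assumes p1: "M ** P ** M = M" and p3: "transpose (M ** P) = M ** P"
  defines "q \<equiv> (\<lambda>a. (A - X *v a) \<bullet> (S *v (A - X *v a)))"
  defines "c \<equiv> P *v (transpose X *v (S *v A))"
  shows "q c = A \<bullet> ((S - S ** X ** P ** transpose X ** S) *v A)" and "q c \<le> q a"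
proof -
  define b where "b = transpose X *v (S *v A)"
  have Mv: "M *v v = transpose X *v (S *v (X *v v))" for v
    by (simp add: M_def matrix_vector_mul_assoc matrix_mul_assoc)
  have symM: "transpose M = M" using sym by (simp add: M_def matrix_transpose_mul matrix_mul_assoc)
  have MPsym: "(M *v (P *v y)) \<bullet> x = y \<bullet> (M *v (P *v x))" for x y
    using sym_dot[OF p3, of y x] by (simp add: matrix_vector_mul_assoc)
  have MPM: "M *v (P *v (M *v v)) = M *v v" for v
    using p1 by (metis matrix_vector_mul_assoc)
  have Mpsd: "0 \<le> v \<bullet> (M *v v)" for v
    using psd[of "X *v v"] by (simp only: Mv tdot)
  define z where "z = b - M *v (P *v b)"
  have zM: "z \<bullet> (M *v v) = 0" for v
  proof -
    have "(M *v (P *v b)) \<bullet> (M *v v) = b \<bullet> (M *v v)" using MPsym[of b "M *v v"] MPM by simp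
    thus ?thesis by (simp add: z_def inner_diff_left)
  qed
  have "(X *v z) \<bullet> (S *v (X *v z)) = 0"
    using zM[of z] by (simp only: Mv tdot)
  hence SXz: "S *v (X *v z) = 0" by (rule psd_zero[OF sym psd])
  have "z \<bullet> z = z \<bullet> b"
    using zM[of "P *v b"] by (simp add: z_def inner_diff_right)
  also have "\<dots> = (X *v z) \<bullet> (S *v A)" by (simp only: b_def tdot)
  also have "\<dots> = (S *v (X *v z)) \<bullet> A" by (rule sym_dot[OF sym, symmetric])
  also have "\<dots> = 0" by (simp add: SXz)
  finally have "z = 0" by simp
  hence bMc: "b = M *v c" by (simp add: z_def c_def b_def)
  have qa: "q a = A \<bullet> (S *v A) - 2 * (a \<bullet> b) + a \<bullet> (M *v a)" for a
  proof -
    have e1: "(X *v a) \<bullet> (S *v A) = a \<bullet> b" 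
      by (simp only: b_def tdot)
    have e2: "A \<bullet> (S *v (X *v a)) = a \<bullet> b" using e1 sym_dot[OF sym, of A "X *v a"]
      by (simp add: inner_commute)
    have e3: "(X *v a) \<bullet> (S *v (X *v a)) = a \<bullet> (M *v a)"
      by (simp only: Mv tdot)
    show ?thesis unfolding q_def
      by (simp add: matrix_vector_mult_diff_distrib inner_diff_left inner_diff_right e1 e2 e3)
  qed
  have cMa: "c \<bullet> (M *v a) = a \<bullet> (M *v c)" for a
    using sym_dot[OF symM, of c a] by (simp add: inner_commute)
  have "q a - q c = (a - c) \<bullet> (M *v (a - c))"
    unfolding qa bMc
    by (simp add: matrix_vector_mult_diff_distrib inner_diff_left inner_diff_right cMa[of a])
  thus "q c \<le> q a" using Mpsd[of "a - c"] by simp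
  have "A \<bullet> ((S ** X ** P ** transpose X ** S) *v A) = b \<bullet> c"
  proof -
    have "A \<bullet> ((S ** X ** P ** transpose X ** S) *v A) = A \<bullet> ((S ** X) *v c)"
      by (simp add: c_def matrix_vector_mul_assoc matrix_mul_assoc)
    also have "\<dots> = (transpose (S ** X) *v A) \<bullet> c" by (rule transpose_dot[symmetric])
    also have "transpose (S ** X) = transpose X ** S" by (simp add: matrix_transpose_mul sym)
    finally show ?thesis by (simp add: b_def matrix_vector_mul_assoc)
  qed
  moreover have "q c = A \<bullet> (S *v A) - c \<bullet> b"
    unfolding qa bMc by simp
  ultimately show "q c = A \<bullet> ((S - S ** X ** P ** transpose X ** S) *v A)"
    by (simp add: matrix_vector_mult_diff_rdistrib inner_diff_right inner_commute)
qed



lemma simplex_param_cont: "continuous_on UNIV (simplex_param :: real^'m::finite \<Rightarrow> _)"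
proof -
  have "continuous_on UNIV (\<lambda>x::real^'m. (case j of None \<Rightarrow> 1 - (\<Sum>i\<in>UNIV. x$i) | Some i \<Rightarrow> x$i))" for j :: "'m option"
    by (cases j) (auto intro!: continuous_intros)
  thus ?thesis unfolding simplex_param_def by (intro continuous_on_vec_lambda)
qed

lemma simplex_dom_compact: "compact (simplex_dom :: (real^'m::finite) set)"
proof -
  have "closed (simplex_dom :: (real^'m) set)"
  proof -
    have c1: "closed {x::real^'m. (\<Sum>i\<in>UNIV. x$i) \<le> 1}"
      by (intro closed_Collect_le continuous_on_sum continuous_on_component continuous_on_id continuous_on_const)
    have "simplex_dom = {x::real^'m. \<forall>i. 0 \<le> x$i} \<inter> {x::real^'m. (\<Sum>i\<in>UNIV. x$i) \<le> 1}"
      unfolding simplex_dom_def by auto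
    thus ?thesis using c1 closed_positive_orthant closed_Int by metis
  qed
  moreover have "simplex_dom \<subseteq> cbox (0::real^'m) 1"
  proof
    fix x :: "real^'m" assume x: "x \<in> simplex_dom"
    have "x$i \<le> 1" for i
    proof -
      have "x$i \<le> (\<Sum>j\<in>UNIV. x$j)" using x unfolding simplex_dom_def
        by (intro member_le_sum) auto
      thus ?thesis using x unfolding simplex_dom_def by simp
    qed
    thus "x \<in> cbox 0 1" using x unfolding simplex_dom_def by (simp add: mem_box_cart)
  qed
  hence "bounded (simplex_dom :: (real^'m) set)" using bounded_cbox bounded_subset by blast
  ultimately show ?thesis by (simp add: compact_eq_bounded_closed)
qed

lemma simplex_integrable:
  fixes f :: "real^('m::finite option) \<Rightarrow> real"
  assumes "continuous_on UNIV f"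
  shows "(\<lambda>x. f (simplex_param x)) integrable_on (simplex_dom :: (real^'m) set)"
proof -
  have c: "continuous_on simplex_dom (\<lambda>x::real^'m. f (simplex_param x))"
  proof -
    have "continuous_on UNIV (f \<circ> (simplex_param :: real^'m \<Rightarrow> _))"
      by (rule continuous_on_compose[OF simplex_param_cont continuous_on_subset[OF assms subset_UNIV]])
    hence "continuous_on simplex_dom (f \<circ> (simplex_param :: real^'m \<Rightarrow> _))"
      by (rule continuous_on_subset) simp
    thus ?thesis by (simp add: comp_def)
  qed
  have "integrable lborel (\<lambda>x::real^'m. indicator simplex_dom x *\<^sub>R f (simplex_param x))"
    by (rule borel_integrable_compact[OF simplex_dom_compact c])
  from has_integral_integral_lborel[OF this]
  have "(\<lambda>x::real^'m. indicator simplex_dom x *\<^sub>R f (simplex_param x)) integrable_on UNIV"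
    unfolding integrable_on_def by blast
  moreover have "(\<lambda>x::real^'m. indicator simplex_dom x *\<^sub>R f (simplex_param x)) =
       (\<lambda>x. if x \<in> simplex_dom then f (simplex_param x) else 0)"
    by (auto simp: indicator_def)
  ultimately have "(\<lambda>x. if x \<in> simplex_dom then f (simplex_param x) else 0) integrable_on (UNIV :: (real^'m) set)"
    by simp
  thus ?thesis by (simp only: Henstock_Kurzweil_Integration.integrable_restrict_UNIV)
qed

lemma simplex_V0_pos: "0 < integral (simplex_dom :: (real^'m::finite) set) (\<lambda>x. 1::real)"
proof -
  define b :: "real^'m" where "b = (\<chi> i. 1 / real CARD('m))"
  have sub: "cbox 0 b \<subseteq> simplex_dom"
  proof
    fix x assume x: "x \<in> cbox 0 b"
    hence x': "\<And>i. 0 \<le> x$i \<and> x$i \<le> 1 / real CARD('m)" by (simp add: mem_box_cart b_def)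
    have "(\<Sum>i\<in>UNIV. x$i) \<le> (\<Sum>i\<in>(UNIV::'m set). 1 / real CARD('m))"
      by (intro sum_mono) (use x' in auto)
    also have "\<dots> = 1" by simp
    finally show "x \<in> simplex_dom" using x' unfolding simplex_dom_def by auto
  qed
  have pos: "\<forall>i\<in>Basis. (0::real^'m) \<bullet> i < b \<bullet> i"
    by (auto simp: Basis_vec_def b_def inner_axis)
  have "0 < integral (cbox 0 b) (\<lambda>x::real^'m. 1::real)"
    using content_pos_lt[OF pos] by simp
  also have "\<dots> \<le> integral simplex_dom (\<lambda>x::real^'m. 1::real)"
    using sub simplex_integrable[of "\<lambda>_. 1"]
    by (intro integral_subset_le) (auto simp: integrable_const_ivl)
  finally show ?thesis .
qed

lemma sq_sum_expand:
  fixes c :: real and w v :: "real^'n"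
  shows "(c - w \<bullet> v)^2 = c^2 * 1 - 2 * c * (\<Sum>i\<in>UNIV. w$i * v$i) + (\<Sum>i\<in>UNIV. \<Sum>j\<in>UNIV. (w$i * w$j) * (v$i * v$j))"
proof -
  have "w \<bullet> v = (\<Sum>i\<in>UNIV. w$i * v$i)" by (simp add: inner_vec_def)
  moreover have "(\<Sum>i\<in>UNIV. w$i * v$i)^2 = (\<Sum>i\<in>UNIV. \<Sum>j\<in>UNIV. (w$i * w$j) * (v$i * v$j))"
    by (simp add: power2_eq_square sum_product mult_ac)
  ultimately show ?thesis by (simp add: power2_diff)
qed

lemma simplex_quad:
  fixes c :: real and w :: "real^('m::finite option)"
  shows "simplex_integral (\<lambda>l::real^('m option). (c - w \<bullet> l)^2) =
     simplex_volume TYPE('m) * (c - (\<Sum>i\<in>UNIV. w$i * simplex_mean i))^2 +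
     simplex_volume TYPE('m) * (w \<bullet> ((simplex_cov :: real^('m option)^('m option)) *v w))"
proof -
  define k where "k = sqrt (real CARD('m option))"
  define D where "D = (simplex_dom :: (real^'m) set)"
  define V0 where "V0 = integral D (\<lambda>x. 1::real)"
  define m1 where "m1 i = integral D (\<lambda>x. simplex_param x $ i)" for i :: "'m option"
  define m2 where "m2 i j = integral D (\<lambda>x. simplex_param x $ i * simplex_param x $ j)" for i j :: "'m option"
  define s1 where "s1 = (\<Sum>i\<in>UNIV. w$i * m1 i)"
  define s2 where "s2 = (\<Sum>i\<in>UNIV. \<Sum>j\<in>UNIV. (w$i * w$j) * m2 i j)"
  have kpos: "k > 0" unfolding k_def by simp
  have V0pos: "V0 > 0" unfolding V0_def D_def by (rule simplex_V0_pos)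
  have vol: "simplex_volume TYPE('m) = k * V0"
    by (simp add: simplex_volume_def simplex_integral_def k_def V0_def D_def)
  have mean: "simplex_mean i = m1 i / V0" for i
    using kpos by (simp add: simplex_mean_def vol simplex_integral_def k_def m1_def D_def)
  have cov: "(simplex_cov :: real^('m option)^('m option)) $ i $ j = m2 i j / V0 - (m1 i / V0) * (m1 j / V0)" for i j
    using kpos by (simp add: simplex_cov_def vol mean simplex_integral_def k_def m2_def D_def)
  have int1: "(\<lambda>x. simplex_param x $ i) integrable_on D" for i
    unfolding D_def by (rule simplex_integrable[where f = "\<lambda>l. l $ i"]) (intro continuous_intros)
  have int2: "(\<lambda>x. simplex_param x $ i * simplex_param x $ j) integrable_on D" for i j
    unfolding D_def by (rule simplex_integrable[where f = "\<lambda>l. l $ i * l $ j"]) (intro continuous_intros)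
  have intc: "(\<lambda>x::real^'m. 1::real) integrable_on D"
    unfolding D_def by (rule simplex_integrable[where f = "\<lambda>l. 1"]) (intro continuous_intros)
  have intA: "(\<lambda>x. c^2 * 1 - 2 * c * (\<Sum>i\<in>UNIV. w$i * simplex_param x $ i)) integrable_on D"
    unfolding D_def by (rule simplex_integrable[where f = "\<lambda>l. c^2 * 1 - 2 * c * (\<Sum>i\<in>UNIV. w$i * l $ i)"]) (intro continuous_intros)
  have intB: "(\<lambda>x. \<Sum>i\<in>UNIV. \<Sum>j\<in>UNIV. (w$i * w$j) * (simplex_param x $ i * simplex_param x $ j)) integrable_on D"
    unfolding D_def by (rule simplex_integrable[where f = "\<lambda>l. \<Sum>i\<in>UNIV. \<Sum>j\<in>UNIV. (w$i * w$j) * (l $ i * l $ j)"]) (intro continuous_intros)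
  have intS: "(\<lambda>x. \<Sum>i\<in>UNIV. w$i * simplex_param x $ i) integrable_on D"
    unfolding D_def by (rule simplex_integrable[where f = "\<lambda>l. \<Sum>i\<in>UNIV. w$i * l $ i"]) (intro continuous_intros)
  have intc2: "(\<lambda>x::real^'m. c^2 * 1) integrable_on D"
    unfolding D_def by (rule simplex_integrable[where f = "\<lambda>l. c^2 * 1"]) (intro continuous_intros)
  have intS2: "(\<lambda>x. 2 * c * (\<Sum>i\<in>UNIV. w$i * simplex_param x $ i)) integrable_on D"
    unfolding D_def by (rule simplex_integrable[where f = "\<lambda>l. 2 * c * (\<Sum>i\<in>UNIV. w$i * l $ i)"]) (intro continuous_intros)
  have intW: "(\<lambda>x. w$i * simplex_param x $ i) integrable_on D" for i
    unfolding D_def by (rule simplex_integrable[where f = "\<lambda>l. w$i * l $ i"]) (intro continuous_intros)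
  have intW2: "(\<lambda>x. (w$i * w$j) * (simplex_param x $ i * simplex_param x $ j)) integrable_on D" for i j
    unfolding D_def by (rule simplex_integrable[where f = "\<lambda>l. (w$i * w$j) * (l $ i * l $ j)"]) (intro continuous_intros)
  have intBi: "(\<lambda>x. \<Sum>j\<in>UNIV. (w$i * w$j) * (simplex_param x $ i * simplex_param x $ j)) integrable_on D" for i
    unfolding D_def by (rule simplex_integrable[where f = "\<lambda>l. \<Sum>j\<in>UNIV. (w$i * w$j) * (l $ i * l $ j)"]) (intro continuous_intros)
  have "integral D (\<lambda>x. (c - w \<bullet> simplex_param x)^2) =
        integral D (\<lambda>x. (c^2 * 1 - 2 * c * (\<Sum>i\<in>UNIV. w$i * simplex_param x $ i)) +
           (\<Sum>i\<in>UNIV. \<Sum>j\<in>UNIV. (w$i * w$j) * (simplex_param x $ i * simplex_param x $ j)))"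
    by (rule integral_cong) (simp only: sq_sum_expand)
  also have "\<dots> = integral D (\<lambda>x. c^2 * 1 - 2 * c * (\<Sum>i\<in>UNIV. w$i * simplex_param x $ i)) +
       integral D (\<lambda>x. \<Sum>i\<in>UNIV. \<Sum>j\<in>UNIV. (w$i * w$j) * (simplex_param x $ i * simplex_param x $ j))"
    by (rule integral_add[OF intA intB])
  also have "integral D (\<lambda>x. c^2 * 1 - 2 * c * (\<Sum>i\<in>UNIV. w$i * simplex_param x $ i)) =
       c^2 * V0 - 2 * c * s1"
  proof -
    have "integral D (\<lambda>x. c^2 * 1 - 2 * c * (\<Sum>i\<in>UNIV. w$i * simplex_param x $ i)) =
        integral D (\<lambda>x. c^2 * 1) - integral D (\<lambda>x. 2 * c * (\<Sum>i\<in>UNIV. w$i * simplex_param x $ i))"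
      by (rule integral_diff[OF intc2 intS2])
    also have "integral D (\<lambda>x. 2 * c * (\<Sum>i\<in>UNIV. w$i * simplex_param x $ i)) =
       2 * c * integral D (\<lambda>x. \<Sum>i\<in>UNIV. w$i * simplex_param x $ i)"
      by simp
    also have "integral D (\<lambda>x. \<Sum>i\<in>UNIV. w$i * simplex_param x $ i) =
       (\<Sum>i\<in>UNIV. integral D (\<lambda>x. w$i * simplex_param x $ i))"
      by (rule integral_sum) (use intW in auto)
    moreover have "integral D (\<lambda>x. c^2 * 1) = c^2 * V0"
      using integral_mult[OF intc, of "c^2"] by (simp add: V0_def)
    ultimately show ?thesis by (simp add: s1_def m1_def)
  qed
  also have "integral D (\<lambda>x. \<Sum>i\<in>UNIV. \<Sum>j\<in>UNIV. (w$i * w$j) * (simplex_param x $ i * simplex_param x $ j)) = s2"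
  proof -
    have "integral D (\<lambda>x. \<Sum>i\<in>UNIV. \<Sum>j\<in>UNIV. (w$i * w$j) * (simplex_param x $ i * simplex_param x $ j))
       = (\<Sum>i\<in>UNIV. integral D (\<lambda>x. \<Sum>j\<in>UNIV. (w$i * w$j) * (simplex_param x $ i * simplex_param x $ j)))"
      by (rule integral_sum) (use intBi in auto)
    also have "\<dots> = (\<Sum>i\<in>UNIV. \<Sum>j\<in>UNIV. integral D (\<lambda>x. (w$i * w$j) * (simplex_param x $ i * simplex_param x $ j)))"
      by (intro sum.cong refl integral_sum) (use intW2 in auto)
    finally show ?thesis by (simp add: s2_def m2_def)
  qed
  finally have I: "integral D (\<lambda>x. (c - w \<bullet> simplex_param x)^2) = c^2 * V0 - 2 * c * s1 + s2" .
  have b: "(\<Sum>i\<in>UNIV. w$i * simplex_mean i) = s1 / V0"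
    by (simp add: mean s1_def sum_divide_distrib)
  have cS: "w \<bullet> ((simplex_cov :: real^('m option)^('m option)) *v w) = s2 / V0 - (s1 / V0)^2"
  proof -
    have "w \<bullet> ((simplex_cov :: real^('m option)^('m option)) *v w) =
        (\<Sum>i\<in>UNIV. \<Sum>j\<in>UNIV. (w$i * w$j) * (m2 i j / V0 - (m1 i / V0) * (m1 j / V0)))"
      by (simp add: inner_vec_def matrix_vector_mult_def cov sum_distrib_left mult_ac)
    also have "\<dots> = (\<Sum>i\<in>UNIV. \<Sum>j\<in>UNIV. (w$i * w$j) * m2 i j) / V0 -
                     (\<Sum>i\<in>UNIV. w$i * (m1 i / V0)) * (\<Sum>j\<in>UNIV. w$j * (m1 j / V0))"
      by (simp add: right_diff_distrib sum_subtractf sum_divide_distrib sum_product mult_ac)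
    also have "(\<Sum>i\<in>UNIV. w$i * (m1 i / V0)) = s1 / V0"
      by (simp add: s1_def sum_divide_distrib)
    finally show ?thesis by (simp add: s2_def power2_eq_square)
  qed
  have "simplex_integral (\<lambda>l::real^('m option). (c - w \<bullet> l)^2) = k * (c^2 * V0 - 2 * c * s1 + s2)"
    using I by (simp add: simplex_integral_def k_def D_def)
  also have "\<dots> = (k * V0) * (c - s1 / V0)^2 + (k * V0) * (s2 / V0 - (s1 / V0)^2)"
    using V0pos by (simp add: field_simps power2_eq_square)
  finally show ?thesis by (simp add: vol b cS)
qed


lemma pinv_props:
  fixes M :: "real^'n^'n"
  assumes "transpose M = M"
  shows "M ** pinv M ** M = M \<and> pinv M ** M ** pinv M = pinv M \<and>
         transpose (M ** pinv M) = M ** pinv M \<and> transpose (pinv M ** M) = pinv M ** M"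
proof -
  have "\<exists>!G. M ** G ** M = M \<and> G ** M ** G = G \<and> transpose (M ** G) = M ** G \<and> transpose (G ** M) = G ** M"
    using pinv_exists_sym[OF assms] pinv_unique[of M] by blast
  thus ?thesis unfolding pinv_def by (rule theI')
qed

lemma simplex_cov_sym: "transpose (simplex_cov :: real^('m::finite option)^('m option)) = simplex_cov"
  unfolding simplex_cov_def transpose_def by (simp add: vec_eq_iff mult.commute)

lemma simplex_volume_pos: "simplex_volume TYPE('m::finite) > 0"
  using simplex_V0_pos[where 'm='m]
  by (simp add: simplex_volume_def simplex_integral_def)

lemma simplex_integral_sq_nonneg:
  fixes c :: real and w :: "real^('m::finite option)"
  shows "0 \<le> simplex_integral (\<lambda>l::real^('m option). (c - w \<bullet> l)^2)"
proof -
  have "(\<lambda>x. (c - w \<bullet> simplex_param x)^2) integrable_on (simplex_dom :: (real^'m) set)"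
    by (rule simplex_integrable[where f = "\<lambda>l. (c - w \<bullet> l)^2"]) (intro continuous_intros)
  hence "0 \<le> integral (simplex_dom :: (real^'m) set) (\<lambda>x. (c - w \<bullet> simplex_param x)^2)"
    by (rule integral_nonneg) simp
  thus ?thesis by (simp add: simplex_integral_def)
qed

lemma simplex_cov_psd: "0 \<le> w \<bullet> ((simplex_cov :: real^('m::finite option)^('m option)) *v w)"
proof -
  have "0 \<le> simplex_integral (\<lambda>l::real^('m option). ((\<Sum>i\<in>UNIV. w$i * simplex_mean i) - w \<bullet> l)^2)"
    by (rule simplex_integral_sq_nonneg)
  also have "\<dots> = simplex_volume TYPE('m) * (w \<bullet> ((simplex_cov :: real^('m option)^('m option)) *v w))"
    by (simp add: simplex_quad)
  finally show ?thesis using simplex_volume_pos[where 'm='m] by (simp add: zero_le_mult_iff)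
qed

theorem lemma8:
  fixes A :: "real^('m::finite option)" and Xi :: "real^'m^('m option)"
  defines "J \<equiv> (\<lambda>(a0::real) (a::real^'m).
             simplex_integral (\<lambda>l. (a0 - (A - Xi *v a) \<bullet> l)^2))"
      and "S \<equiv> (simplex_cov :: real^('m option)^('m option))"
  defines "R \<equiv> simplex_volume TYPE('m) *
             (A \<bullet> ((S - S ** Xi ** pinv (transpose Xi ** S ** Xi) ** transpose Xi ** S) *v A))"
  shows "(\<exists>a0 a. J a0 a = R) \<and> (\<forall>a0 a. R \<le> J a0 a)"
proof -
  define V where "V = simplex_volume TYPE('m)"
  define M where "M = transpose Xi ** S ** Xi"
  define P where "P = pinv M"
  define q where "q = (\<lambda>a. (A - Xi *v a) \<bullet> (S *v (A - Xi *v a)))"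
  define c where "c = P *v (transpose Xi *v (S *v A))"
  define mu where "mu = (\<lambda>w::real^('m option). \<Sum>i\<in>UNIV. w$i * simplex_mean i)"
  have Vpos: "V > 0" unfolding V_def by (rule simplex_volume_pos)
  have symS: "transpose S = S" unfolding S_def by (rule simplex_cov_sym)
  have psd: "\<And>w. 0 \<le> w \<bullet> (S *v w)" unfolding S_def by (rule simplex_cov_psd)
  have symM: "transpose M = M" unfolding M_def using symS
    by (simp add: matrix_transpose_mul matrix_mul_assoc)
  have pp: "M ** P ** M = M" "transpose (M ** P) = M ** P"
    using pinv_props[OF symM] unfolding P_def by auto
  have L1: "q c = A \<bullet> ((S - S ** Xi ** P ** transpose Xi ** S) *v A)" and L2: "\<And>a. q c \<le> q a"
    using lsq[OF symS psd, of Xi P A, folded M_def, OF pp] unfolding q_def c_def by auto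
  have RV: "R = V * q c" unfolding R_def V_def L1 P_def M_def by simp
  have J: "J a0 a = V * (a0 - mu (A - Xi *v a))^2 + V * q a" for a0 a
    unfolding J_def V_def q_def mu_def S_def by (rule simplex_quad)
  have "J (mu (A - Xi *v c)) c = R" using J RV by simp
  moreover have "R \<le> J a0 a" for a0 a
  proof -
    have "R \<le> V * q a" using RV L2[of a] Vpos by simp
    also have "\<dots> \<le> J a0 a" using J[of a0 a] Vpos by simp
    finally show ?thesis .
  qed
  ultimately show ?thesis by blast
qed

end
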